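(* Let $G$ be the path on $n\ge 3$ vertices. Then $$\mathcal{R}(G)=\begin{cases}\displaystyle\sum_{i=1}^{n/2}\frac{2n^2-3n-4i+4}{n(n-1)^2-2(n-1)(i-1)} & \text{if } n \text{ is even},\\[2ex] \displaystyle\frac{2n^2-3n-1}{2n(n-1)^2}+\sum_{i=1}^{\lfloor n/2\rfloor}\frac{2n^3-3n^2-4n(i-1)+1}{n^2(n-1)^2-2n(n-1)(i-1)} & \text{if } n \text{ is odd}.\end{cases}$$
   Context: All graphs are finite, simple and connected, with at least two vertices; $d(u,v)$ denotes the shortest-path distance. $V_p$ denotes the set of all unordered pairs $(u,v)$ of distinct vertices. A vertex $x$ resolves the pair $(u,v)$ if $d(x,u)\neq d(x,v)$. For $(u,v)\in V_p$, $R(u,v)$ is the set of all vertices resolving $(u,v)$ (it always contains $u$ and $v$). The resolving share of a vertex $w$ for $(u,v)$ is $r_w(u,v)=\frac{1}{|R(u,v)|}$ if $w$ resolves $u$ and $v$, and $r_w(u,v)=0$ otherwise. For a vertex $w$, $R(w)$ is the set of pairs in $V_p$ resolved by $w$. The average resolving share of $w$ is $ar_w(G)=\frac{1}{|R(w)|}\sum_{(u,v)\in R(w)} r_w(u,v)$, and the resolving topological index of $G$ is $\mathcal{R}(G)=\sum_{w\in V(G)} ar_w(G)$. *)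

theory Defs
  imports Complex_Main
begin

text \<open>A graph is given by a vertex set V and an edge relation E (intended finite, simple,
connected: E symmetric and irreflexive on V).\<close>

inductive walk :: "'a set \<Rightarrow> ('a \<Rightarrow> 'a \<Rightarrow> bool) \<Rightarrow> nat \<Rightarrow> 'a \<Rightarrow> 'a \<Rightarrow> bool"
  for V E where
  walk_refl: "u \<in> V \<Longrightarrow> walk V E 0 u u"
| walk_step: "u \<in> V \<Longrightarrow> E u w \<Longrightarrow> walk V E k w v \<Longrightarrow> walk V E (Suc k) u v"

definition gdist :: "'a set \<Rightarrow> ('a \<Rightarrow> 'a \<Rightarrow> bool) \<Rightarrow> 'a \<Rightarrow> 'a \<Rightarrow> nat" where
  "gdist V E u v = (LEAST k. walk V E k u v)"

definition Vp :: "'a set \<Rightarrow> 'a set set" where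
  "Vp V = {{u, v} | u v. u \<in> V \<and> v \<in> V \<and> u \<noteq> v}"

definition resolves :: "'a set \<Rightarrow> ('a \<Rightarrow> 'a \<Rightarrow> bool) \<Rightarrow> 'a \<Rightarrow> 'a \<Rightarrow> 'a \<Rightarrow> bool" where
  "resolves V E x u v \<longleftrightarrow> gdist V E x u \<noteq> gdist V E x v"

definition resolving_set :: "'a set \<Rightarrow> ('a \<Rightarrow> 'a \<Rightarrow> bool) \<Rightarrow> 'a \<Rightarrow> 'a \<Rightarrow> 'a set" where
  "resolving_set V E u v = {x \<in> V. resolves V E x u v}"

definition resolving_share :: "'a set \<Rightarrow> ('a \<Rightarrow> 'a \<Rightarrow> bool) \<Rightarrow> 'a \<Rightarrow> 'a \<Rightarrow> 'a \<Rightarrow> real" where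
  "resolving_share V E w u v =
     (if resolves V E w u v then 1 / real (card (resolving_set V E u v)) else 0)"

definition resolved_pairs :: "'a set \<Rightarrow> ('a \<Rightarrow> 'a \<Rightarrow> bool) \<Rightarrow> 'a \<Rightarrow> 'a set set" where
  "resolved_pairs V E w = {p \<in> Vp V. \<exists>u v. p = {u, v} \<and> resolves V E w u v}"

text \<open>Resolving share of w for an unordered pair p = {u,v} (independent of the order).\<close>
definition pair_share :: "'a set \<Rightarrow> ('a \<Rightarrow> 'a \<Rightarrow> bool) \<Rightarrow> 'a \<Rightarrow> 'a set \<Rightarrow> real" where
  "pair_share V E w p = (THE r. \<exists>u v. p = {u, v} \<and> r = resolving_share V E w u v)"

definition avg_resolving_share :: "'a set \<Rightarrow> ('a \<Rightarrow> 'a \<Rightarrow> bool) \<Rightarrow> 'a \<Rightarrow> real" where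
  "avg_resolving_share V E w =
     (1 / real (card (resolved_pairs V E w))) * (\<Sum>p\<in>resolved_pairs V E w. pair_share V E w p)"

definition resolving_index :: "'a set \<Rightarrow> ('a \<Rightarrow> 'a \<Rightarrow> bool) \<Rightarrow> real" where
  "resolving_index V E = (\<Sum>w\<in>V. avg_resolving_share V E w)"

definition path_V :: "nat \<Rightarrow> nat set" where "path_V n = {0..<n}"
definition path_E :: "nat \<Rightarrow> nat \<Rightarrow> bool" where "path_E i j \<longleftrightarrow> i + 1 = j \<or> j + 1 = i"

end

theory Submission imports Defs begin

definition D :: "nat \<Rightarrow> nat \<Rightarrow> nat" where "D u v = (if u \<le> v then v - u else u - v)"

lemma walk_bound: "walk (path_V n) path_E k u v \<Longrightarrow> u < n \<and> v < n \<and> D u v \<le> k"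
  by (induction rule: walk.induct) (auto simp: path_V_def path_E_def D_def split: if_splits)

lemma walk_up: "u + d < n \<Longrightarrow> walk (path_V n) path_E d u (u+d)"
proof (induction d arbitrary: u)
  case 0 then show ?case by (auto intro: walk_refl simp: path_V_def)
next
  case (Suc d)
  have h: "walk (path_V n) path_E d (u+1) (u + Suc d)" using Suc by (metis add_Suc_right add_Suc_shift Suc_eq_plus1)
  have e: "path_E u (u+1)" by (simp add: path_E_def)
  have "u \<in> path_V n" using Suc.prems by (simp add: path_V_def)
  then show ?case by (rule walk_step[OF _ e h])
qed

lemma walk_down: "u + d < n \<Longrightarrow> walk (path_V n) path_E d (u+d) u"
proof (induction d arbitrary: u)
  case 0 then show ?case by (auto intro: walk_refl simp: path_V_def)
next
  case (Suc d)
  have h: "walk (path_V n) path_E d (u+d) u" using Suc by auto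
  have e: "path_E (u + Suc d) (u+d)" by (simp add: path_E_def)
  have "u + Suc d \<in> path_V n" using Suc.prems by (simp add: path_V_def)
  then show ?case by (rule walk_step[OF _ e h])
qed

lemma walk_D: "u < n \<Longrightarrow> v < n \<Longrightarrow> walk (path_V n) path_E (D u v) u v"
proof (cases "u \<le> v")
  case True
  assume "v < n"
  then show ?thesis using True walk_up[of u "v-u" n] by (simp add: D_def)
next
  case False
  assume "u < n"
  then show ?thesis using False walk_down[of v "u-v" n] by (simp add: D_def)
qed

lemma gdist_path: "u<n \<Longrightarrow> v<n \<Longrightarrow> gdist (path_V n) path_E u v = D u v"
  unfolding gdist_def
  by (rule Least_equality) (auto intro: walk_D dest: walk_bound)

lemma resolves_path: "x<n \<Longrightarrow> u<n \<Longrightarrow> v<n \<Longrightarrow> u\<noteq>v \<Longrightarrow>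
   resolves (path_V n) path_E x u v \<longleftrightarrow> u+v \<noteq> 2*x"
  by (simp add: resolves_def gdist_path D_def) arith

lemma card_rs: "u<n \<Longrightarrow> v<n \<Longrightarrow> u\<noteq>v \<Longrightarrow>
  card (resolving_set (path_V n) path_E u v) = (if even (u+v) then n-1 else n)"
proof -
  assume a: "u<n" "v<n" "u\<noteq>v"
  have eq: "resolving_set (path_V n) path_E u v = {0..<n} - {x. u+v = 2*x}"
  proof -
    have r: "\<And>x. x<n \<Longrightarrow> resolves (path_V n) path_E x u v \<longleftrightarrow> u+v \<noteq> 2*x"
      using resolves_path a by blast
    show ?thesis unfolding resolving_set_def using r by (auto simp: path_V_def)
  qed
  show ?thesis
  proof (cases "even (u+v)")
    case True
    then obtain c where c: "u+v = 2*c" by blast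
    then have "{x. u+v = 2*x} = {c}" by auto
    moreover have "c < n" using a c by simp
    ultimately show ?thesis using eq True by simp
  next
    case False
    then have "{x. u+v = 2*x} = {}" by (metis (mono_tags) empty_Collect_eq dvd_triv_left)
    then show ?thesis using eq False by simp
  qed
qed

lemma rs_sym: "resolving_share V E w u v = resolving_share V E w v u"
proof -
  have "resolving_set V E u v = resolving_set V E v u"
    by (auto simp: resolving_set_def resolves_def)
  then show ?thesis by (simp add: resolving_share_def resolves_def)
qed

lemma pair_share_eq: "pair_share V E w {u,v} = resolving_share V E w u v"
  unfolding pair_share_def
  by (rule the_equality) (auto simp: doubleton_eq_iff rs_sym)

lemma share_path: "w<n \<Longrightarrow> u<n \<Longrightarrow> v<n \<Longrightarrow> u\<noteq>v \<Longrightarrow>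
  resolving_share (path_V n) path_E w u v =
   (if u+v = 2*w then 0 else if even (u+v) then 1 / real (n-1) else 1 / real n)"
  by (simp add: resolving_share_def resolves_path card_rs)

definition P :: "nat \<Rightarrow> (nat \<times> nat) set" where "P n = (SIGMA v:{..<n}. {..<v})"
definition Po :: "nat \<Rightarrow> (nat \<times> nat) set" where "Po n = (SIGMA v:{..<n}. {u. u<v \<and> odd(u+v)})"
definition Pe :: "nat \<Rightarrow> (nat \<times> nat) set" where "Pe n = (SIGMA v:{..<n}. {u. u<v \<and> even(u+v)})"
definition T :: "nat \<Rightarrow> nat \<Rightarrow> (nat \<times> nat) set" where "T n w = {(v,u). u<v \<and> v<n \<and> u+v = 2*w}"
definition S :: "nat \<Rightarrow> nat \<Rightarrow> (nat \<times> nat) set" where "S n w = {(v,u). u<v \<and> v<n \<and> u+v \<noteq> 2*w}"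

lemma sum_id2: "2 * (\<Sum>v<n. v) = n * (n - 1::nat)"
proof (induction n)
  case 0 then show ?case by simp
next
  case (Suc n)
  have "2*(\<Sum>v<Suc n. v) = 2*(\<Sum>v<n. v) + 2*n" by simp
  then show ?case using Suc by (cases n) simp_all
qed

lemma card_P: "2 * card (P n) = n * (n - 1)"
  unfolding P_def by (simp add: card_SigmaI sum_id2)

lemma card_inner: "card {u. u<v \<and> odd(u+v)} = (v+1) div 2 \<and> card {u. u<v \<and> even(u+v)} = v div 2"
proof (induction v)
  case 0 then show ?case by simp
next
  case (Suc v)
  have e1: "{u. u<Suc v \<and> odd(u+Suc v)} = insert v {u. u<v \<and> even(u+v)}" by auto
  have e2: "{u. u<Suc v \<and> even(u+Suc v)} = {u. u<v \<and> odd(u+v)}" by (auto simp: less_Suc_eq)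
  have f: "finite {u. u<v \<and> even(u+v)}" by simp
  have "v \<notin> {u. u<v \<and> even(u+v)}" by simp
  then have "card {u. u<Suc v \<and> odd(u+Suc v)} = Suc (v div 2)"
    using Suc f unfolding e1 by simp
  moreover have "card {u. u<Suc v \<and> even(u+Suc v)} = (v+1) div 2"
    using Suc unfolding e2 by blast
  ultimately show ?case by simp
qed

lemma sum_half: "4 * (\<Sum>v<n. (v+1) div 2) + (if odd n then 1 else 0) = n * (n::nat)"
proof (induction n)
  case 0 then show ?case by simp
next
  case (Suc n)
  show ?case
  proof (cases "even n")
    case True
    then obtain k where "n = 2*k" by blast
    then show ?thesis using Suc by (simp add: algebra_simps)
  next
    case False
    then obtain k where "n = 2*k+1" using oddE by blast
    then show ?thesis using Suc by (simp add: algebra_simps)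
  qed
qed

lemma card_Po: "4 * card (Po n) + (if odd n then 1 else 0) = n * n"
  unfolding Po_def using card_inner sum_half by (simp add: card_SigmaI)

lemma P_split: "P n = Po n \<union> Pe n" "Po n \<inter> Pe n = {}"
  by (auto simp: P_def Po_def Pe_def)

lemma fin: "finite (P n)" "finite (Po n)" "finite (Pe n)"
  by (auto simp: P_def Po_def Pe_def)

lemma card_T: "w < n \<Longrightarrow> card (T n w) = min w (n-1-w)"
proof -
  assume w: "w < n"
  have "T n w = (\<lambda>u. (2*w-u, u)) ` {2*w+1-n..<w}"
  proof (rule set_eqI, rule iffI)
    fix x assume "x \<in> T n w"
    then obtain v u where x: "x = (v,u)" "u<v" "v<n" "u+v=2*w" by (auto simp: T_def)
    then have "u \<in> {2*w+1-n..<w}" "v = 2*w-u" by auto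
    then show "x \<in> (\<lambda>u. (2*w-u, u)) ` {2*w+1-n..<w}" using x by auto
  next
    fix x assume "x \<in> (\<lambda>u. (2*w-u, u)) ` {2*w+1-n..<w}"
    then show "x \<in> T n w" by (auto simp: T_def)
  qed
  moreover have "inj_on (\<lambda>u. (2*w-u, u)) {2*w+1-n..<w}" by (auto intro: inj_onI)
  ultimately have "card (T n w) = card {2*w+1-n..<w}" by (simp add: card_image)
  then show ?thesis using w by simp
qed

lemma T_sub: "T n w \<subseteq> Pe n"
  by (auto simp: T_def Pe_def) presburger+

lemma S_eq: "S n w = P n - T n w"
  by (auto simp: S_def P_def T_def)

lemma rp_eq: "w<n \<Longrightarrow> resolved_pairs (path_V n) path_E w = (\<lambda>(v,u). {u,v}) ` S n w"
proof (rule set_eqI, rule iffI)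
  fix p assume w: "w<n" and p: "p \<in> resolved_pairs (path_V n) path_E w"
  then obtain a b where ab: "p = {a,b}" "a<n" "b<n" "a\<noteq>b"
    by (auto simp: resolved_pairs_def Vp_def path_V_def)
  from p obtain u v where uv: "p = {u,v}" "resolves (path_V n) path_E w u v"
    by (auto simp: resolved_pairs_def)
  have "u<n" "v<n" "u\<noteq>v" using ab uv by (auto simp: doubleton_eq_iff)
  then have s: "u+v \<noteq> 2*w" using uv resolves_path w by blast
  show "p \<in> (\<lambda>(v,u). {u,v}) ` S n w"
  proof (cases "u<v")
    case True
    then have "(v,u) \<in> S n w" using s \<open>v<n\<close> by (simp add: S_def)
    then show ?thesis using uv by force
  next
    case False
    then have "(u,v) \<in> S n w" using s \<open>u<n\<close> \<open>u\<noteq>v\<close> by (simp add: S_def add.commute)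
    then show ?thesis using uv by (force simp: insert_commute)
  qed
next
  fix p assume w: "w<n" and p: "p \<in> (\<lambda>(v,u). {u,v}) ` S n w"
  then obtain v u where uv: "p = {u,v}" "u<v" "v<n" "u+v \<noteq> 2*w" by (auto simp: S_def)
  then have "resolves (path_V n) path_E w u v" using resolves_path w by simp
  moreover have "p \<in> Vp (path_V n)" unfolding Vp_def path_V_def mem_Collect_eq using uv by (intro exI[of _ u] exI[of _ v]) auto
  ultimately show "p \<in> resolved_pairs (path_V n) path_E w" using uv by (auto simp: resolved_pairs_def)
qed

lemma S_inj: "inj_on (\<lambda>(v,u). {u,v}) (S n w)"
  by (auto intro!: inj_onI simp: S_def doubleton_eq_iff)

definition gg :: "nat \<Rightarrow> nat \<times> nat \<Rightarrow> real" where
  "gg n = (\<lambda>(v,u). if even(u+v) then 1/real(n-1) else 1/real n)"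

lemma fin_S: "finite (S n w)" unfolding S_eq using fin by simp

lemma avg_eq: "w<n \<Longrightarrow> avg_resolving_share (path_V n) path_E w = (1 / real (card (S n w))) * sum (gg n) (S n w)"
proof -
  assume w: "w<n"
  have "sum (pair_share (path_V n) path_E w) ((\<lambda>(v,u). {u,v}) ` S n w)
     = sum (pair_share (path_V n) path_E w \<circ> (\<lambda>(v,u). {u,v})) (S n w)"
    by (rule sum.reindex[OF S_inj])
  also have "\<dots> = sum (gg n) (S n w)"
  proof (rule sum.cong)
    fix x assume "x \<in> S n w"
    then obtain v u where "x = (v,u)" "u<v" "v<n" "u+v \<noteq> 2*w" by (auto simp: S_def)
    then show "(pair_share (path_V n) path_E w \<circ> (\<lambda>(v,u). {u,v})) x = gg n x"
      using w by (simp add: pair_share_eq share_path gg_def)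
  qed simp
  finally show ?thesis unfolding avg_resolving_share_def rp_eq[OF w]
    by (simp add: card_image[OF S_inj])
qed

lemma alg1: "1/(a::real) * (x*(1/b) + y*(1/c) - z*(1/c)) = (x/b + (y - z)/c)/a"
  by (cases "a=0"; cases "b=0"; cases "c=0") (simp_all add: field_simps)

lemma sum_const_on: "(\<And>x. x \<in> A \<Longrightarrow> f x = c) \<Longrightarrow> sum f A = real (card A) * c"
  by simp

lemma avg_formula: assumes w: "w<n"
  shows "avg_resolving_share (path_V n) path_E w =
    (real (card (Po n)) / real n + (real n * (real n - 1) / 2 - real (card (Po n)) - real (min w (n-1-w))) / (real n - 1))
    / (real n * (real n - 1) / 2 - real (min w (n-1-w)))"
proof -
  have n1: "n \<ge> 1" using w by simp
  have rn1: "real (n-1) = real n - 1" using n1 by simp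
  have cP: "real (card (P n)) = real n * (real n - 1) / 2"
  proof -
    have "real (2 * card (P n)) = real (n * (n-1))" using card_P by metis
    then show ?thesis using rn1 by simp
  qed
  have cPe: "real (card (Pe n)) = real (card (P n)) - real (card (Po n))"
    using card_Un_disjoint[OF fin(2,3) P_split(2)] P_split(1) by simp
  have TP: "T n w \<subseteq> P n" using T_sub P_split by blast
  have cS: "real (card (S n w)) = real (card (P n)) - real (card (T n w))"
    unfolding S_eq using card_Diff_subset[OF finite_subset[OF TP fin(1)] TP] card_mono[OF fin(1) TP] by simp
  have sP: "sum (gg n) (P n) = sum (gg n) (Po n) + sum (gg n) (Pe n)"
    unfolding P_split(1) by (rule sum.union_disjoint[OF fin(2,3) P_split(2)])
  have sPo: "sum (gg n) (Po n) = real (card (Po n)) * (1 / real n)"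
    by (rule sum_const_on) (auto simp: Po_def gg_def)
  have sPe: "sum (gg n) (Pe n) = real (card (Pe n)) * (1 / real (n-1))"
    by (rule sum_const_on) (auto simp: Pe_def gg_def)
  have sT: "sum (gg n) (T n w) = real (card (T n w)) * (1 / real (n-1))"
  proof (rule sum_const_on)
    fix x assume "x \<in> T n w"
    then obtain v u where "x = (v,u)" "u+v = 2*w" by (auto simp: T_def)
    moreover have "even u = even v" using \<open>u+v = 2*w\<close> by presburger
    ultimately show "gg n x = 1 / real (n-1)" by (simp add: gg_def)
  qed
  have sS: "sum (gg n) (S n w) = sum (gg n) (P n) - sum (gg n) (T n w)"
    unfolding S_eq using sum.subset_diff[OF TP fin(1), of "gg n"] by simp
  show ?thesis
    unfolding avg_eq[OF w] sS sP sPo sPe sT cS cPe cP card_T[OF w] rn1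
    by (rule alg1)
qed


lemma helper2: "u \<noteq> 0 \<Longrightarrow> B \<noteq> 0 \<Longrightarrow> 2*(((A::real)/(4*u))/(B/2)) = A/(u*B)"
  by (simp add: field_simps)

lemma helper3: "u \<noteq> 0 \<Longrightarrow> B \<noteq> 0 \<Longrightarrow> ((A::real)/(4*u))/(B/2) = A/(2*u*B)"
  by (simp add: field_simps)

lemma Bpos: fixes x m :: real assumes "x \<ge> 3" "2*m < x" shows "x*(x-1) - 2*m > 0"
proof -
  have "x*2 \<le> x*(x-1)" by (rule mult_left_mono) (use assms in auto)
  then show ?thesis using assms by linarith
qed

lemma alg_even:
  fixes x m :: real
  assumes "x \<ge> 3" "0 \<le> m" "2*m < x"
  shows "2 * (((x^2/4)/x + (x*(x-1)/2 - x^2/4 - m)/(x-1)) / (x*(x-1)/2 - m))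
       = (2*x^2 - 3*x - 4*(m+1) + 4) / (x*(x-1)^2 - 2*(x-1)*((m+1)-1))"
proof -
  have a: "x - 1 \<noteq> 0" "x \<noteq> 0" using assms by auto
  have B: "x*(x-1) - 2*m \<noteq> 0" using Bpos[OF assms(1,3)] by simp
  have s: "(x^2/4)/x + (x*(x-1)/2 - x^2/4 - m)/(x-1) = (2*x^2 - 3*x - 4*m)/(4*(x-1))"
    using a by (simp add: field_simps power2_eq_square)
  have d: "x*(x-1)/2 - m = (x*(x-1) - 2*m)/2" by simp
  have r: "x*(x-1)^2 - 2*(x-1)*((m+1)-1) = (x-1)*(x*(x-1) - 2*m)" by (simp add: algebra_simps power2_eq_square)
  have n: "2*x^2 - 3*x - 4*(m+1) + 4 = 2*x^2 - 3*x - 4*m" by simp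
  show ?thesis unfolding s d r n by (rule helper2[OF a(1) B])
qed

lemma alg_odd:
  fixes x m :: real
  assumes "x \<ge> 3" "0 \<le> m" "2*m < x"
  shows "2 * ((((x^2-1)/4)/x + (x*(x-1)/2 - (x^2-1)/4 - m)/(x-1)) / (x*(x-1)/2 - m))
       = (2*x^3 - 3*x^2 - 4*x*((m+1)-1) + 1) / (x^2*(x-1)^2 - 2*x*(x-1)*((m+1)-1))"
proof -
  have a: "x - 1 \<noteq> 0" "x \<noteq> 0" "x*(x-1) \<noteq> 0" using assms by auto
  have B: "x*(x-1) - 2*m \<noteq> 0" using Bpos[OF assms(1,3)] by simp
  have s: "((x^2-1)/4)/x + (x*(x-1)/2 - (x^2-1)/4 - m)/(x-1) = (2*x^3 - 3*x^2 - 4*x*m + 1)/(4*(x*(x-1)))"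
    using a by (simp add: field_simps power2_eq_square power3_eq_cube)
  have d: "x*(x-1)/2 - m = (x*(x-1) - 2*m)/2" by simp
  have r: "x^2*(x-1)^2 - 2*x*(x-1)*((m+1)-1) = (x*(x-1))*(x*(x-1) - 2*m)" by (simp add: algebra_simps power2_eq_square)
  have n: "2*x^3 - 3*x^2 - 4*x*((m+1)-1) + 1 = 2*x^3 - 3*x^2 - 4*x*m + 1" by simp
  show ?thesis unfolding s d r n by (rule helper2[OF a(3) B])
qed

lemma alg_mid:
  fixes x :: real
  assumes "x \<ge> 3"
  shows "(((x^2-1)/4)/x + (x*(x-1)/2 - (x^2-1)/4 - (x-1)/2)/(x-1)) / (x*(x-1)/2 - (x-1)/2)
       = (2*x^2 - 3*x - 1) / (2*x*(x-1)^2)"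
proof -
  have a: "x - 1 \<noteq> 0" "x \<noteq> 0" using assms by auto
  have s: "((x^2-1)/4)/x + (x*(x-1)/2 - (x^2-1)/4 - (x-1)/2)/(x-1) = (2*x^2 - 3*x - 1)/(4*x)"
  proof -
    have e: "x*(x-1)/2 - (x^2-1)/4 - (x-1)/2 = (x-1)*((x-3)/4)" by (simp add: field_simps power2_eq_square)
    have f: "(x-1)*((x-3)/4)/(x-1) = (x-3)/4" using a(1) by (rule nonzero_mult_div_cancel_left)
    have g: "(x-3)/4 = (x*(x-3))/(4*x)" using a by simp
    have h: "((x^2-1)/4)/x = (x^2-1)/(4*x)" by simp
    have k: "(x^2-1)/(4*x) + (x*(x-3))/(4*x) = ((x^2-1) + x*(x-3))/(4*x)" by (rule add_divide_distrib[symmetric])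
    have l: "(x^2-1) + x*(x-3) = 2*x^2 - 3*x - 1" by (simp add: algebra_simps power2_eq_square)
    show ?thesis unfolding e unfolding f unfolding g h unfolding k l ..
  qed
  have b0: "x*(x-1) - (x-1) = (x-1)^2" by (simp add: algebra_simps power2_eq_square)
  have b: "x*(x-1)/2 - (x-1)/2 = (x-1)^2/2" unfolding diff_divide_distrib[symmetric] b0 ..
  have c: "(x-1)^2 \<noteq> 0" using a by simp
  show ?thesis unfolding s b by (rule helper3[OF a(2) c])
qed


definition Fh :: "nat \<Rightarrow> nat \<Rightarrow> real" where
  "Fh n j = ((real (card (Po n)) / real n + (real n * (real n - 1) / 2 - real (card (Po n)) - real j) / (real n - 1))
    / (real n * (real n - 1) / 2 - real j))"

lemma ri_eq: "resolving_index (path_V n) path_E = (\<Sum>w<n. Fh n (min w (n-1-w)))"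
proof -
  have "path_V n = {..<n}" by (auto simp: path_V_def)
  then show ?thesis unfolding resolving_index_def
    by (rule sum.cong) (simp add: avg_formula Fh_def)
qed

lemma sym_even: "(\<Sum>w<2*k. (h::nat\<Rightarrow>real) (min w (2*k-1-w))) = 2 * (\<Sum>j<k. h j)"
proof -
  have "(\<Sum>w<2*k. h (min w (2*k-1-w))) = (\<Sum>w\<in>{0..<k}. h (min w (2*k-1-w))) + (\<Sum>w\<in>{k..<2*k}. h (min w (2*k-1-w)))"
    using sum.atLeastLessThan_concat[where m=0 and n=k and p="2*k" and g="\<lambda>w. h (min w (2*k-1-w))"]
    by (simp add: atLeast0LessThan)
  also have "(\<Sum>w\<in>{0..<k}. h (min w (2*k-1-w))) = (\<Sum>j<k. h j)"
    by (rule sum.cong) auto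
  also have "(\<Sum>w\<in>{k..<2*k}. h (min w (2*k-1-w))) = (\<Sum>i\<in>{0..<k}. h (min (i+k) (2*k-1-(i+k))))"
    using sum.shift_bounds_nat_ivl[of "\<lambda>w. h (min w (2*k-1-w))" 0 k k] by (simp add: mult_2)
  also have "\<dots> = (\<Sum>i<k. h (k - Suc i))"
    by (rule sum.cong) auto
  also have "\<dots> = (\<Sum>j<k. h j)" by (rule sum.nat_diff_reindex)
  finally show ?thesis by simp
qed

lemma sym_odd: "(\<Sum>w<2*k+1. (h::nat\<Rightarrow>real) (min w (2*k+1-1-w))) = 2 * (\<Sum>j<k. h j) + h k"
proof -
  have "(\<Sum>w<2*k+1. h (min w (2*k+1-1-w))) = (\<Sum>w\<in>{0..<k+1}. h (min w (2*k-w))) + (\<Sum>w\<in>{k+1..<2*k+1}. h (min w (2*k-w)))"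
    using sum.atLeastLessThan_concat[where m=0 and n="k+1" and p="2*k+1" and g="\<lambda>w. h (min w (2*k-w))"]
    by (simp add: atLeast0LessThan)
  also have "(\<Sum>w\<in>{0..<k+1}. h (min w (2*k-w))) = (\<Sum>j<k. h j) + h k"
    by (simp add: atLeast0LessThan)
  also have "(\<Sum>w\<in>{k+1..<2*k+1}. h (min w (2*k-w))) = (\<Sum>i\<in>{0..<k}. h (min (i+(k+1)) (2*k-(i+(k+1)))))"
    using sum.shift_bounds_nat_ivl[of "\<lambda>w. h (min w (2*k-w))" 0 "k+1" k] by (simp add: mult_2 add.commute)
  also have "\<dots> = (\<Sum>i<k. h (k - Suc i))"
    by (rule sum.cong) auto
  also have "\<dots> = (\<Sum>j<k. h j)" by (rule sum.nat_diff_reindex)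
  finally show ?thesis by simp
qed

lemma even_case:
  fixes n :: nat
  assumes "n \<ge> 3" and True: "even n"
  shows "resolving_index (path_V n) path_E =
       (\<Sum>i=1..n div 2. (2 * real n ^ 2 - 3 * real n - 4 * real i + 4) /
                         (real n * (real n - 1) ^ 2 - 2 * (real n - 1) * (real i - 1)))"
proof -
  from True obtain k where k: "n = 2*k" by blast
  have x3: "real n \<ge> 3" using assms by simp
  have Po: "real (card (Po n)) = real n ^ 2 / 4"
  proof -
    have "4 * card (Po n) = n * n" using card_Po[of n] True by simp
    then have "real (4 * card (Po n)) = real (n*n)" by metis
    then show ?thesis by (simp add: power2_eq_square)
  qed
  have "resolving_index (path_V n) path_E = 2 * (\<Sum>j<k. Fh n j)"
    unfolding ri_eq k by (rule sym_even)
  also have "\<dots> = (\<Sum>j<k. 2 * Fh n j)" by (simp add: sum_distrib_left)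
  also have "\<dots> = (\<Sum>j<k. (2 * real n ^ 2 - 3 * real n - 4 * real (Suc j) + 4) /
                         (real n * (real n - 1) ^ 2 - 2 * (real n - 1) * (real (Suc j) - 1)))"
  proof (rule sum.cong)
    fix j assume "j \<in> {..<k}"
    then have j: "2 * real j < real n" using k by simp
    have s: "real (Suc j) = real j + 1" by simp
    show "2 * Fh n j = (2 * real n ^ 2 - 3 * real n - 4 * real (Suc j) + 4) /
                         (real n * (real n - 1) ^ 2 - 2 * (real n - 1) * (real (Suc j) - 1))"
      unfolding Fh_def Po s by (rule alg_even[OF x3 _ j]) simp
  qed simp
  also have "\<dots> = (\<Sum>i=1..n div 2. (2 * real n ^ 2 - 3 * real n - 4 * real i + 4) /
                         (real n * (real n - 1) ^ 2 - 2 * (real n - 1) * (real i - 1)))"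
    using sum.atLeast1_atMost_eq[of "\<lambda>i. (2 * real n ^ 2 - 3 * real n - 4 * real i + 4) /
                         (real n * (real n - 1) ^ 2 - 2 * (real n - 1) * (real i - 1))" k]
    by (simp add: k)
  finally show ?thesis .
qed

lemma odd_case:
  fixes n :: nat
  assumes "n \<ge> 3" and False: "odd n"
  shows "resolving_index (path_V n) path_E =
       (2 * real n ^ 2 - 3 * real n - 1) / (2 * real n * (real n - 1) ^ 2)
       + (\<Sum>i=1..n div 2. (2 * real n ^ 3 - 3 * real n ^ 2 - 4 * real n * (real i - 1) + 1) /
                         (real n ^ 2 * (real n - 1) ^ 2 - 2 * real n * (real n - 1) * (real i - 1)))"
proof -
  from False obtain k where k: "n = 2*k+1" using oddE by blast
  have x3: "real n \<ge> 3" using assms by simp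
  have Po: "real (card (Po n)) = (real n ^ 2 - 1) / 4"
  proof -
    have "4 * card (Po n) + 1 = n * n" using card_Po[of n] False by simp
    then have "real (4 * card (Po n) + 1) = real (n*n)" by metis
    then show ?thesis by (simp add: power2_eq_square)
  qed
  have "resolving_index (path_V n) path_E = 2 * (\<Sum>j<k. Fh n j) + Fh n k"
    unfolding ri_eq k by (rule sym_odd)
  also have "2 * (\<Sum>j<k. Fh n j) = (\<Sum>j<k. 2 * Fh n j)" by (simp add: sum_distrib_left)
  also have "\<dots> = (\<Sum>j<k. (2 * real n ^ 3 - 3 * real n ^ 2 - 4 * real n * (real (Suc j) - 1) + 1) /
                         (real n ^ 2 * (real n - 1) ^ 2 - 2 * real n * (real n - 1) * (real (Suc j) - 1)))"
  proof (rule sum.cong)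
    fix j assume "j \<in> {..<k}"
    then have j: "2 * real j < real n" using k by simp
    have s: "real (Suc j) = real j + 1" by simp
    show "2 * Fh n j = (2 * real n ^ 3 - 3 * real n ^ 2 - 4 * real n * (real (Suc j) - 1) + 1) /
                         (real n ^ 2 * (real n - 1) ^ 2 - 2 * real n * (real n - 1) * (real (Suc j) - 1))"
      unfolding Fh_def Po s by (rule alg_odd[OF x3 _ j]) simp
  qed simp
  also have "\<dots> = (\<Sum>i=1..n div 2. (2 * real n ^ 3 - 3 * real n ^ 2 - 4 * real n * (real i - 1) + 1) /
                         (real n ^ 2 * (real n - 1) ^ 2 - 2 * real n * (real n - 1) * (real i - 1)))"
    using sum.atLeast1_atMost_eq[of "\<lambda>i. (2 * real n ^ 3 - 3 * real n ^ 2 - 4 * real n * (real i - 1) + 1) /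
                         (real n ^ 2 * (real n - 1) ^ 2 - 2 * real n * (real n - 1) * (real i - 1))" k]
    by (simp add: k)
  also have "Fh n k = (2 * real n ^ 2 - 3 * real n - 1) / (2 * real n * (real n - 1) ^ 2)"
  proof -
    have kk: "real k = (real n - 1) / 2" using k by simp
    show ?thesis unfolding Fh_def Po kk by (rule alg_mid[OF x3])
  qed
  finally show ?thesis by (simp add: add.commute)
qed

theorem theorem3p7:
  fixes n :: nat
  assumes "n \<ge> 3"
  shows "resolving_index (path_V n) path_E =
    (if even n then
       (\<Sum>i=1..n div 2. (2 * real n ^ 2 - 3 * real n - 4 * real i + 4) /
                         (real n * (real n - 1) ^ 2 - 2 * (real n - 1) * (real i - 1)))
     else
       (2 * real n ^ 2 - 3 * real n - 1) / (2 * real n * (real n - 1) ^ 2)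
       + (\<Sum>i=1..n div 2. (2 * real n ^ 3 - 3 * real n ^ 2 - 4 * real n * (real i - 1) + 1) /
                         (real n ^ 2 * (real n - 1) ^ 2 - 2 * real n * (real n - 1) * (real i - 1))))"
  using assms even_case odd_case by simp

end
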